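(* Let $f\in C[-1,1]$ be absolutely continuous with formal Chebyshev series $f\sim\sum_{n=0}^\infty a_nT_n$. If both $\mathcal D^0_+f$ and $\mathcal D^0_-f$ belong to $C[-1,1]$, then the formal Legendre series $\mathcal D^0_+f\sim\sum_{n=0}^\infty b_nP_n$ has coefficients $b_n=(n+1)\pi a_{n+1}$ for all $n\ge0$, and the formal Legendre series $\mathcal D^0_-f\sim\sum_{n=0}^\infty c_nP_n$ has coefficients $c_n=n\pi a_n$ for all $n\ge0$.
   Context: $T_n$ are the Chebyshev polynomials of the first kind and $P_n$ the Legendre polynomials. The formal Chebyshev series has coefficients $a_0=\frac1\pi\int_{-1}^1 f(t)(1-t^2)^{-1/2}dt$, $a_n=\frac2\pi\int_{-1}^1 f(t)T_n(t)(1-t^2)^{-1/2}dt$ ($n\ge1$); the formal Legendre series of $g$ has coefficients $\frac{2n+1}{2}\int_{-1}^1 g P_n$. For $f$ absolutely continuous and $\lambda\ge0$: $D^\lambda_+f(x)=(1+x)\frac{d}{dx}\Big\{(1+x)^{-\lambda}\int_{-1}^x(x-\tau)^{-1/2}(1+\tau)^{\lambda-1/2}f(\tau)\,d\tau\Big\}$, $D^\lambda_-f(x)=(1-x)\frac{d}{dx}\Big\{(1-x)^{-\lambda}\int_x^1(\tau-x)^{-1/2}(1-\tau)^{\lambda-1/2}f(\tau)\,d\tau\Big\}$, $\mathcal D^\lambda_\pm=D^\lambda_+\pm D^\lambda_-$; here $\lambda=0$. *)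

theory Defs
  imports "HOL-Analysis.Analysis"
begin

definition abs_cont_on_interval :: "real \<Rightarrow> real \<Rightarrow> (real \<Rightarrow> real) \<Rightarrow> bool" where
  "abs_cont_on_interval a b f \<longleftrightarrow>
     (\<forall>\<epsilon>>0. \<exists>\<delta>>0. \<forall>(n::nat) (u::nat \<Rightarrow> real) (v::nat \<Rightarrow> real).
        (\<forall>i<n. a \<le> u i \<and> u i \<le> v i \<and> v i \<le> b) \<and>
        (\<forall>i<n. \<forall>j<n. i \<noteq> j \<longrightarrow> v i \<le> u j \<or> v j \<le> u i) \<and>
        (\<Sum>i<n. v i - u i) < \<delta>
        \<longrightarrow> (\<Sum>i<n. \<bar>f (v i) - f (u i)\<bar>) < \<epsilon>)"

fun chebT :: "nat \<Rightarrow> real \<Rightarrow> real" where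
  "chebT 0 x = 1"
| "chebT (Suc 0) x = x"
| "chebT (Suc (Suc n)) x = 2 * x * chebT (Suc n) x - chebT n x"

fun legP :: "nat \<Rightarrow> real \<Rightarrow> real" where
  "legP 0 x = 1"
| "legP (Suc 0) x = x"
| "legP (Suc (Suc n)) x =
     ((2 * real n + 3) * x * legP (Suc n) x - (real n + 1) * legP n x) / (real n + 2)"

definition cheb_coeff :: "(real \<Rightarrow> real) \<Rightarrow> nat \<Rightarrow> real" where
  "cheb_coeff f n =
     (if n = 0 then 1 / pi else 2 / pi) *
     integral {-1..1} (\<lambda>t. f t * chebT n t * (1 - t\<^sup>2) powr (-1/2))"

definition leg_coeff :: "(real \<Rightarrow> real) \<Rightarrow> nat \<Rightarrow> real" where
  "leg_coeff g n = (2 * real n + 1) / 2 * integral {-1..1} (\<lambda>t. g t * legP n t)"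

definition Dplus_inner :: "real \<Rightarrow> (real \<Rightarrow> real) \<Rightarrow> real \<Rightarrow> real" where
  "Dplus_inner lam f x = (1 + x) powr (-lam) *
     integral {-1..x} (\<lambda>\<tau>. (x - \<tau>) powr (-1/2) * (1 + \<tau>) powr (lam - 1/2) * f \<tau>)"

definition Dminus_inner :: "real \<Rightarrow> (real \<Rightarrow> real) \<Rightarrow> real \<Rightarrow> real" where
  "Dminus_inner lam f x = (1 - x) powr (-lam) *
     integral {x..1} (\<lambda>\<tau>. (\<tau> - x) powr (-1/2) * (1 - \<tau>) powr (lam - 1/2) * f \<tau>)"

definition Dplus :: "real \<Rightarrow> (real \<Rightarrow> real) \<Rightarrow> real \<Rightarrow> real" where
  "Dplus lam f x = (1 + x) * deriv (Dplus_inner lam f) x"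

definition Dminus :: "real \<Rightarrow> (real \<Rightarrow> real) \<Rightarrow> real \<Rightarrow> real" where
  "Dminus lam f x = (1 - x) * deriv (Dminus_inner lam f) x"

definition calD_plus :: "real \<Rightarrow> (real \<Rightarrow> real) \<Rightarrow> real \<Rightarrow> real" where
  "calD_plus lam f x = Dplus lam f x + Dminus lam f x"

definition calD_minus :: "real \<Rightarrow> (real \<Rightarrow> real) \<Rightarrow> real \<Rightarrow> real" where
  "calD_minus lam f x = Dplus lam f x - Dminus lam f x"

end

theory Submission
  imports Defs "HOL-Computational_Algebra.Polynomial"
begin

lemma gen_subst_nonneg:
  fixes f g g' :: "real \<Rightarrow> real" and a b c d :: real
  assumes ab: "a < b" and cd: "c < d"
    and contf: "\<And>t. t \<in> {c<..<d} \<Longrightarrow> isCont f t"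
    and fnn: "\<And>t. t \<in> {c<..<d} \<Longrightarrow> 0 \<le> f t"
    and derg: "\<And>x. x \<in> {a<..<b} \<Longrightarrow> (g has_real_derivative g' x) (at x)"
    and contg': "\<And>x. x \<in> {a<..<b} \<Longrightarrow> isCont g' x"
    and grange: "\<And>x. x \<in> {a<..<b} \<Longrightarrow> g x \<in> {c<..<d}"
    and g'nn: "\<And>x. x \<in> {a..b} \<Longrightarrow> 0 \<le> g' x"
    and contg: "continuous_on {a..b} g" and ga: "g a = c" and gb: "g b = d"
    and h: "continuous_on {a..b} h"
    and fg: "\<And>x. x \<in> {a<..<b} \<Longrightarrow> f (g x) * g' x = h x"
  shows "(f has_integral integral {a..b} h) {c..d}"
proof -
  have A: "((ereal \<circ> g \<circ> real_of_ereal) \<longlongrightarrow> ereal c) (at_right (ereal a))"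
  proof -
    have "(g \<longlongrightarrow> g a) (at_right a)"
      using contg ab by (metis atLeastAtMost_iff continuous_on_Icc_at_rightD less_eq_real_def order_refl)
    then show ?thesis using ga by (simp add: ereal_tendsto_simps)
  qed
  have B: "((ereal \<circ> g \<circ> real_of_ereal) \<longlongrightarrow> ereal d) (at_left (ereal b))"
  proof -
    have "(g \<longlongrightarrow> g b) (at_left b)"
      using contg ab by (metis atLeastAtMost_iff continuous_on_Icc_at_leftD less_eq_real_def order_refl)
    then show ?thesis using gb by (simp add: ereal_tendsto_simps)
  qed
  have hint: "set_integrable lborel {a..b} h"
    by (rule borel_integrable_atLeastAtMost'[OF h])
  have int_fg: "set_integrable lborel (einterval (ereal a) (ereal b)) (\<lambda>x. f (g x) * g' x)"
  proof -
    have "set_integrable lborel (einterval (ereal a) (ereal b)) h"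
      by (rule set_integrable_subset[OF hint]) (auto simp: einterval_def)
    then show ?thesis
      by (rule set_integrable_cong[THEN iffD1, rotated -1]) (auto simp: einterval_def fg)
  qed
  note S = interval_integral_substitution_nonneg[of "ereal a" "ereal b" g g' f "ereal c" "ereal d",
     OF _ _ _ _ _ _ A B int_fg]
  have S1: "set_integrable lborel (einterval (ereal c) (ereal d)) f"
    and S2: "(LBINT x=ereal c..ereal d. f x) = (LBINT x=ereal a..ereal b. f (g x) * g' x)"
    using S ab derg contf contg' fnn grange g'nn by auto
  have S1': "set_integrable lborel {c<..<d} f" using S1 by simp
  have "(LBINT x=ereal a..ereal b. f (g x) * g' x) = (LBINT x=ereal a..ereal b. h x)"
    using ab by (simp add: interval_lebesgue_integral_le_eq) (rule set_lebesgue_integral_cong, auto simp: fg)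
  also have "\<dots> = integral {a..b} h"
    using ab hint by (simp add: interval_integral_eq_integral)
  finally have e1: "(LBINT x=ereal c..ereal d. f x) = integral {a..b} h" using S2 by simp
  have "(LBINT x=ereal c..ereal d. f x) = integral {c<..<d} f"
    using cd S1' by (simp add: interval_lebesgue_integral_le_eq set_borel_integral_eq_integral)
  moreover have "(f has_integral integral {c<..<d} f) {c<..<d}"
    using set_borel_integral_eq_integral(1)[OF S1'] by (simp add: has_integral_integral)
  ultimately show ?thesis using e1 by (simp add: has_integral_Icc_iff_Ioo)
qed

lemma gen_subst:
  fixes F k g g' :: "real \<Rightarrow> real" and a b c d :: real
  assumes ab: "a < b" and cd: "c < d"
    and contF: "continuous_on {c..d} F"
    and contk: "\<And>t. t \<in> {c<..<d} \<Longrightarrow> isCont k t"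
    and knn: "\<And>t. t \<in> {c<..<d} \<Longrightarrow> 0 \<le> k t"
    and derg: "\<And>x. x \<in> {a<..<b} \<Longrightarrow> (g has_real_derivative g' x) (at x)"
    and contg': "\<And>x. x \<in> {a<..<b} \<Longrightarrow> isCont g' x"
    and grange: "\<And>x. x \<in> {a<..<b} \<Longrightarrow> g x \<in> {c<..<d}"
    and g'nn: "\<And>x. x \<in> {a..b} \<Longrightarrow> 0 \<le> g' x"
    and contg: "continuous_on {a..b} g" and ga: "g a = c" and gb: "g b = d"
    and kg: "\<And>x. x \<in> {a<..<b} \<Longrightarrow> k (g x) * g' x = 1"
  shows "((\<lambda>t. F t * k t) has_integral integral {a..b} (\<lambda>x. F (g x))) {c..d}"
proof -
  have "bounded (F ` {c..d})"
    using compact_imp_bounded[OF compact_continuous_image[OF contF compact_Icc]] .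
  then obtain M where "\<forall>y\<in>F ` {c..d}. norm y \<le> M" by (auto simp: bounded_iff)
  then have M: "\<And>t. t \<in> {c..d} \<Longrightarrow> \<bar>F t\<bar> \<le> M" by auto
  have gin: "g x \<in> {c..d}" if "x \<in> {a..b}" for x
  proof (cases "x = a \<or> x = b")
    case True then show ?thesis using ga gb cd by auto
  next
    case False then show ?thesis using grange[of x] that by auto
  qed
  have contFg: "continuous_on {a..b} (\<lambda>x. F (g x))"
    by (rule continuous_on_compose2[OF contF contg]) (use gin in auto)
  have contFt: "isCont F t" if "t \<in> {c<..<d}" for t
    using contF that by (metis at_within_Icc_at continuous_on_eq_continuous_within greaterThanLessThan_iff
        less_eq_real_def atLeastAtMost_iff)
  have M0: "0 \<le> M" using M[of c] cd by auto
  have I1: "((\<lambda>t. (F t + M) * k t) has_integral integral {a..b} (\<lambda>x. F (g x) + M)) {c..d}"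
  proof (rule gen_subst_nonneg[OF ab cd _ _ derg contg' grange g'nn contg ga gb])
    show "continuous_on {a..b} (\<lambda>x. F (g x) + M)" by (intro continuous_intros contFg)
  next
    fix t assume "t \<in> {c<..<d}" then show "isCont (\<lambda>t. (F t + M) * k t) t"
      by (intro continuous_intros contFt contk)
  next
    fix t assume t: "t \<in> {c<..<d}"
    have "0 \<le> F t + M" using M[of t] t by auto
    then show "0 \<le> (F t + M) * k t" using knn[OF t] by simp
  next
    fix x assume "x \<in> {a<..<b}" then show "(F (g x) + M) * k (g x) * g' x = F (g x) + M"
      using kg by (metis mult.assoc mult.right_neutral)
  qed auto
  have I2: "((\<lambda>t. M * k t) has_integral integral {a..b} (\<lambda>x. M)) {c..d}"
  proof (rule gen_subst_nonneg[OF ab cd _ _ derg contg' grange g'nn contg ga gb])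
    fix t assume "t \<in> {c<..<d}" then show "isCont (\<lambda>t. M * k t) t"
      by (intro continuous_intros contk)
  next
    fix t assume t: "t \<in> {c<..<d}"
    then show "0 \<le> M * k t" using knn[OF t] M0 by simp
  next
    fix x assume "x \<in> {a<..<b}" then show "M * k (g x) * g' x = M"
      using kg by (metis mult.assoc mult.right_neutral)
  qed auto
  have "integral {a..b} (\<lambda>x. F (g x) + M) - integral {a..b} (\<lambda>x. M) = integral {a..b} (\<lambda>x. F (g x))"
    by (subst integral_add) (auto intro!: integrable_continuous_real contFg)
  with has_integral_diff[OF I1 I2] show ?thesis by (simp add: algebra_simps)
qed

lemma sq_powr_neg_half: "(y::real) > 0 \<Longrightarrow> (y^2) powr (-1/2) = 1 / y"
proof -
  assume y: "y > 0"
  have "(y^2) powr (-1/2) = (y powr 2) powr (-1/2)" using y by (simp add: powr_realpow)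
  also have "\<dots> = y powr (-1)" by (simp add: powr_powr)
  finally show ?thesis using y by (simp add: powr_minus_divide)
qed

lemma powr_neg_half_mult: "(A::real) > 0 \<Longrightarrow> B > 0 \<Longrightarrow> A powr (-1/2) * B powr (-1/2) = (A*B) powr (-1/2)"
  by (simp add: powr_mult)

lemma u_eq_U:
  fixes f :: "real \<Rightarrow> real"
  assumes contf: "continuous_on {-1..1} f" and x: "x \<in> {-1<..<1}"
  shows "Dplus_inner 0 f x = integral {0..pi} (\<lambda>\<phi>. f (-1 + (1+x)*(1-cos \<phi>)/2))"
proof -
  define k where "k = (\<lambda>\<tau>::real. (x-\<tau>) powr (-1/2) * (1+\<tau>) powr (-1/2))"
  define g where "g = (\<lambda>\<phi>. -1 + (1+x)*(1-cos \<phi>)/2)"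
  have x1: "1 + x > 0" "x < 1" using x by auto
  have I: "((\<lambda>t. f t * k t) has_integral integral {0..pi} (\<lambda>\<phi>. f (g \<phi>))) {-1..x}"
  proof (rule gen_subst[where g' = "\<lambda>\<phi>. (1+x) * sin \<phi> / 2"])
    show "continuous_on {-1..x} f" by (rule continuous_on_subset[OF contf]) (use x in auto)
  next
    fix t assume t: "t \<in> {-1<..<x}"
    show "isCont k t" unfolding k_def using t apply (intro continuous_intros) apply auto done
    show "0 \<le> k t" unfolding k_def by simp
  next
    fix \<phi> assume p: "\<phi> \<in> {0<..<pi}"
    show "(g has_real_derivative (1+x) * sin \<phi> / 2) (at \<phi>)" unfolding g_def
      by (auto intro!: derivative_eq_intros)
    show "isCont (\<lambda>\<phi>. (1+x) * sin \<phi> / 2) \<phi>" by (intro continuous_intros) simp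
    have c: "cos \<phi> < 1" "-1 < cos \<phi>"
      using cos_monotone_0_pi[of 0 \<phi>] cos_monotone_0_pi[of \<phi> pi] p by auto
    have "(1+x)*(1-cos \<phi>) > 0" "(1+x)*(1+cos \<phi>) > 0" using c x1 by auto
    then show "g \<phi> \<in> {-1<..<x}" unfolding g_def
      by (auto simp: algebra_simps)
    have s: "sin \<phi> > 0" using p by (auto intro: sin_gt_zero)
    have e1: "x - g \<phi> = (1+x)*(1+cos \<phi>)/2" "1 + g \<phi> = (1+x)*(1-cos \<phi>)/2"
      unfolding g_def by (auto simp: field_simps)
    have "k (g \<phi>) = (((1+x) * sin \<phi> / 2)^2) powr (-1/2)"
      unfolding k_def e1
      apply (subst powr_neg_half_mult)
      using c x1 apply (auto intro!: mult_pos_pos)[2]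
      apply (rule arg_cong[where f="\<lambda>z. z powr (-1/2)"])
      by (simp add: power_mult_distrib power_divide sin_squared_eq) (simp add: algebra_simps power2_eq_square)
    also have "\<dots> = 1 / ((1+x) * sin \<phi> / 2)" using s x1 by (intro sq_powr_neg_half) auto
    finally show "k (g \<phi>) * ((1+x) * sin \<phi> / 2) = 1" using s x1 by simp
  next
    fix \<phi> assume "\<phi> \<in> {0..pi}"
    then have "sin \<phi> \<ge> 0" by (auto intro!: sin_ge_zero)
    then show "0 \<le> (1+x) * sin \<phi> / 2" using x1 by simp
  next
    show "continuous_on {0..pi} g" unfolding g_def by (intro continuous_intros) auto
  qed (use x1 in \<open>auto simp: g_def field_simps\<close>)
  have "Dplus_inner 0 f x = integral {-1..x} (\<lambda>t. f t * k t)"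
    unfolding Dplus_inner_def k_def using x1
    by (auto simp: powr_zero_eq_one intro!: integral_cong)
  then show ?thesis using integral_unique[OF I] by (simp add: g_def)
qed

lemma cheb_subst:
  fixes F :: "real \<Rightarrow> real"
  assumes contF: "continuous_on {-1..1} F"
  shows "((\<lambda>t. F t * (1 - t^2) powr (-1/2)) has_integral integral {0..pi} (\<lambda>\<theta>. F (- cos \<theta>))) {-1..1}"
proof (rule gen_subst[where g = "\<lambda>\<theta>. - cos \<theta>" and g' = sin, OF pi_gt_zero _ contF])
  fix t :: real assume t: "t \<in> {-1<..<1}"
  then have "1 - t^2 > 0" by (simp add: abs_less_iff abs_square_less_1)
  then show "isCont (\<lambda>t. (1 - t^2) powr (-1/2)) t" by (intro continuous_intros) auto
  show "0 \<le> (1 - t^2) powr (-1/2)" by simp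
next
  fix \<phi> assume p: "\<phi> \<in> {0<..<pi}"
  show "((\<lambda>\<theta>. - cos \<theta>) has_real_derivative sin \<phi>) (at \<phi>)" by (auto intro!: derivative_eq_intros)
  show "isCont sin \<phi>" by simp
  have c: "cos \<phi> < 1" "-1 < cos \<phi>"
    using cos_monotone_0_pi[of 0 \<phi>] cos_monotone_0_pi[of \<phi> pi] p by auto
  then show "- cos \<phi> \<in> {-1<..<1}" by auto
  have s: "sin \<phi> > 0" using p by (auto intro: sin_gt_zero)
  have "(1 - (- cos \<phi>)^2) = (sin \<phi>)^2" by (simp add: sin_squared_eq)
  then have "(1 - (- cos \<phi>)^2) powr (-1/2) = 1 / sin \<phi>" using sq_powr_neg_half[OF s] by simp
  then show "(1 - (- cos \<phi>)^2) powr (-1/2) * sin \<phi> = 1" using s by simp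
next
  fix \<phi> assume "\<phi> \<in> {0..pi}" then show "0 \<le> sin \<phi>" by (auto intro!: sin_ge_zero)
qed (auto intro!: continuous_intros)

lemma chebT_cos_aux: "chebT m (- cos \<theta>) = (-1)^m * cos (real m * \<theta>) \<and> 
    chebT (Suc m) (- cos \<theta>) = (-1)^(Suc m) * cos (real (Suc m) * \<theta>)"
proof (induction m)
  case (Suc n)
  have "cos (real (Suc (Suc n)) * \<theta>) + cos (real n * \<theta>) = 2 * cos \<theta> * cos (real (Suc n) * \<theta>)"
    using cos_add[of "real (Suc n) * \<theta>" \<theta>] cos_diff[of "real (Suc n) * \<theta>" \<theta>]
    by (simp add: algebra_simps)
  then have "(-1)^n * (cos (real (Suc (Suc n)) * \<theta>) + cos (real n * \<theta>)) = (-1)^n * (2 * cos \<theta> * cos (real (Suc n) * \<theta>))"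
    by simp
  then show ?case using Suc by (simp add: algebra_simps)
qed auto

lemma chebT_cos: "chebT m (- cos \<theta>) = (-1)^m * cos (real m * \<theta>)"
  using chebT_cos_aux by blast

lemma cont_chebT[continuous_intros]: "continuous_on S (\<lambda>x. chebT n x)"
proof -
  have "continuous_on S (\<lambda>x. chebT n x) \<and> continuous_on S (\<lambda>x. chebT (Suc n) x)"
    by (induction n) (auto intro!: continuous_intros)
  then show ?thesis by blast
qed

definition Ccos :: "(real \<Rightarrow> real) \<Rightarrow> nat \<Rightarrow> real" where
  "Ccos f m = integral {0..pi} (\<lambda>\<theta>. f (- cos \<theta>) * cos (real m * \<theta>))"

lemma cheb_coeff_Ccos:
  assumes "continuous_on {-1..1} f"
  shows "cheb_coeff f m = (if m = 0 then 1 / pi else 2 / pi) * (-1)^m * Ccos f m"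
proof -
  have "((\<lambda>t. (f t * chebT m t) * (1 - t^2) powr (-1/2)) has_integral
      integral {0..pi} (\<lambda>\<theta>. f (- cos \<theta>) * chebT m (- cos \<theta>))) {-1..1}"
    by (rule cheb_subst) (intro continuous_intros assms)
  moreover have "integral {0..pi} (\<lambda>\<theta>. f (- cos \<theta>) * chebT m (- cos \<theta>)) = (-1)^m * Ccos f m"
    unfolding Ccos_def chebT_cos by (simp add: mult.left_commute)
  ultimately show ?thesis unfolding cheb_coeff_def by (simp add: integral_unique)
qed

fun lp :: "nat \<Rightarrow> real poly" where
  "lp 0 = 1"
| "lp (Suc 0) = [:0, 1:]"
| "lp (Suc (Suc n)) = smult (1 / (real n + 2)) (smult (2 * real n + 3) ([:0, 1:] * lp (Suc n)) - smult (real n + 1) (lp n))"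

lemma legP_poly: "legP n x = poly (lp n) x"
proof -
  have "legP n x = poly (lp n) x \<and> legP (Suc n) x = poly (lp (Suc n)) x"
    by (induction n) (auto simp: field_simps)
  then show ?thesis by blast
qed

lemma legP_1: "legP n 1 = 1"
proof -
  have "legP n 1 = 1 \<and> legP (Suc n) 1 = 1"
    by (induction n) (auto simp: field_simps)
  then show ?thesis by blast
qed

lemma legP_neg: "legP n (-x) = (-1)^n * legP n x"
proof -
  have "legP n (-x) = (-1)^n * legP n x \<and> legP (Suc n) (-x) = (-1)^(Suc n) * legP (Suc n) x"
    by (induction n) (auto simp: field_simps)
  then show ?thesis by blast
qed

definition dP :: "nat \<Rightarrow> real \<Rightarrow> real" where "dP n x = poly (pderiv (lp n)) x"

lemma legP_deriv0: "(legP n has_real_derivative dP n x) (at x within S)"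
  unfolding dP_def legP_poly[abs_def] by (rule has_field_derivative_at_within[OF poly_DERIV])

lemma legP_deriv[derivative_intros]: "(g has_real_derivative g') (at x within S) \<Longrightarrow>
   ((\<lambda>y. legP n (g y)) has_real_derivative dP n (g x) * g') (at x within S)"
  by (rule DERIV_chain'[OF _ legP_deriv0])

lemma cont_legP[continuous_intros]: "continuous_on S (\<lambda>x. legP n x)"
  unfolding legP_poly by (intro continuous_intros)

lemma cont_dP[continuous_intros]: "continuous_on S (\<lambda>x. dP n x)"
  unfolding dP_def by (intro continuous_intros)

lemma dP_neg: "dP n (-x) = (-1)^(Suc n) * dP n x"
proof -
  have d1: "((\<lambda>y. legP n (-y)) has_real_derivative - dP n (-x)) (at x)"
    by (auto intro!: derivative_eq_intros)
  have d2: "((\<lambda>y. legP n (-y)) has_real_derivative (-1)^n * dP n x) (at x)"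
    unfolding legP_neg by (auto intro!: derivative_eq_intros)
  from DERIV_unique[OF d1 d2] show ?thesis by simp
qed

definition U :: "(real \<Rightarrow> real) \<Rightarrow> real \<Rightarrow> real" where
  "U f x = integral {0..pi} (\<lambda>\<phi>. f (-1 + (1+x)*(1-cos \<phi>)/2))"

lemma arg_range:
  assumes "x \<in> {-1..1}" shows "-1 + (1+x)*(1-cos \<phi>)/2 \<in> {-1..(1::real)}"
proof -
  have "0 \<le> 1 + x" "1 + x \<le> 2" "0 \<le> 1 - cos \<phi>" "1 - cos \<phi> \<le> 2" using assms by auto
  then have "0 \<le> (1+x)*(1-cos \<phi>)" "(1+x)*(1-cos \<phi>) \<le> 2 * 2"
    using mult_mono[of "1+x" 2 "1-cos \<phi>" 2] by auto
  then show ?thesis by auto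
qed

lemma arg_bound: "-1 \<le> x \<Longrightarrow> x \<le> 1 \<Longrightarrow> (1+x)*(1-cos \<phi>) \<le> (4::real)"
  "-1 \<le> x \<Longrightarrow> 0 \<le> (1+x)*(1-cos \<phi>)"
  using mult_mono[of "1+x" 2 "1-cos \<phi>" 2] by auto

lemma cont_U:
  assumes contf: "continuous_on {-1..1} f"
  shows "continuous_on {-1..1} (U f)"
proof -
  have "continuous_on ({-1..1} \<times> cbox 0 pi) (\<lambda>(x, \<phi>). f (-1 + (1+x)*(1-cos \<phi>)/2))"
    unfolding case_prod_beta
    by (rule continuous_on_compose2[OF contf]) (auto intro!: continuous_intros arg_bound)
  from integral_continuous_on_param[OF this] show ?thesis unfolding U_def[abs_def] by simp
qed

definition rP :: "nat \<Rightarrow> real \<Rightarrow> real" where "rP n x = legP n x + (1+x) * dP n x"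

lemma cont_rP[continuous_intros]: "continuous_on S (\<lambda>x. rP n x)"
  unfolding rP_def by (intro continuous_intros)

lemma core_ftc:
  fixes f :: "real \<Rightarrow> real"
  assumes contf: "continuous_on {-1..1} f"
    and diff: "\<forall>x\<in>{-1<..<1}. Dplus_inner 0 f differentiable (at x)"
  shows "((\<lambda>x. Dplus 0 f x * legP n x + U f x * rP n x) has_integral 2 * U f 1) {-1..1}"
proof -
  define G where "G x = (1+x) * U f x * legP n x" for x
  have contG: "continuous_on {-1..1} G" unfolding G_def
    by (intro continuous_intros cont_U contf)
  have "((\<lambda>x. Dplus 0 f x * legP n x + U f x * rP n x) has_integral (G 1 - G (-1))) {-1..1}"
  proof (rule fundamental_theorem_of_calculus_interior[OF _ contG])
    fix x :: real assume x: "x \<in> {-1<..<1}"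
    have "(Dplus_inner 0 f has_real_derivative deriv (Dplus_inner 0 f) x) (at x)"
      using diff x by (simp add: DERIV_deriv_iff_real_differentiable)
    then have dU: "(U f has_real_derivative deriv (Dplus_inner 0 f) x) (at x)"
      by (rule has_field_derivative_transform_within_open[where S="{-1<..<1}"])
         (use x contf in \<open>auto simp: u_eq_U U_def\<close>)
    have "(G has_real_derivative
        (U f x * legP n x + (1+x) * deriv (Dplus_inner 0 f) x * legP n x + (1+x) * U f x * dP n x)) (at x)"
      unfolding G_def[abs_def]
      by (auto intro!: derivative_eq_intros dU simp: algebra_simps)
    then show "(G has_vector_derivative Dplus 0 f x * legP n x + U f x * rP n x) (at x)"
      unfolding has_real_derivative_iff_has_vector_derivative[symmetric] Dplus_def rP_def
      by (simp add: algebra_simps)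
  qed simp
  then show ?thesis by (simp add: G_def legP_1)
qed

definition A :: "nat \<Rightarrow> nat \<Rightarrow> real" where
  "A j m = integral {0..pi} (\<lambda>\<theta>. (1 - cos \<theta>)^j * cos (real m * \<theta>))"

definition Ac :: "nat \<Rightarrow> nat \<Rightarrow> real" where
  "Ac j m = (-1)^m * pi * real ((2*j) choose (j+m)) / 2^j"

lemma int_cos_m: "integral {0..pi} (\<lambda>\<theta>. cos (real m * \<theta>)) = (if m = 0 then pi else 0)"
proof (cases "m = 0")
  case False
  have "((\<lambda>\<theta>. cos (real m * \<theta>)) has_integral (sin (real m * pi) / m - sin (real m * 0) / m)) {0..pi}"
    by (rule fundamental_theorem_of_calculus) (use False in \<open>auto intro!: derivative_eq_intros simp: has_real_derivative_iff_has_vector_derivative[symmetric]\<close>)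
  then show ?thesis using False by (simp add: integral_unique sin_npi2 mult.commute)
qed simp

lemma A_0: "A 0 m = (if m = 0 then pi else 0)"
  unfolding A_def by (simp add: int_cos_m)

lemma integrable_cont: "continuous_on {0..pi} (g::real\<Rightarrow>real) \<Longrightarrow> g integrable_on {0..pi}"
  by (rule integrable_continuous_interval)

lemma A_step:
  "A (Suc j) m = A j m - integral {0..pi} (\<lambda>\<theta>. (1 - cos \<theta>)^j * (cos \<theta> * cos (real m * \<theta>)))"
proof -
  have "A (Suc j) m = integral {0..pi} (\<lambda>\<theta>. (1 - cos \<theta>)^j * cos (real m * \<theta>) - (1 - cos \<theta>)^j * (cos \<theta> * cos (real m * \<theta>)))"
    unfolding A_def by (rule integral_cong) (simp add: algebra_simps)
  also have "\<dots> = A j m - integral {0..pi} (\<lambda>\<theta>. (1 - cos \<theta>)^j * (cos \<theta> * cos (real m * \<theta>)))"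
    unfolding A_def by (rule integral_diff) (auto intro!: integrable_cont continuous_intros)
  finally show ?thesis .
qed

lemma A_Suc_0: "A (Suc j) 0 = A j 0 - A j 1"
  unfolding A_step by (simp add: A_def)

lemma A_Suc_Suc: "A (Suc j) (Suc m) = A j (Suc m) - (A j (Suc (Suc m)) + A j m) / 2"
proof -
  have e: "cos \<theta> * cos (real (Suc m) * \<theta>) = (cos (real (Suc (Suc m)) * \<theta>) + cos (real m * \<theta>)) / 2" for \<theta>
    using cos_add[of "real (Suc m) * \<theta>" \<theta>] cos_diff[of "real (Suc m) * \<theta>" \<theta>]
    by (simp add: algebra_simps)
  have "integral {0..pi} (\<lambda>\<theta>. (1 - cos \<theta>)^j * (cos \<theta> * cos (real (Suc m) * \<theta>)))
      = integral {0..pi} (\<lambda>\<theta>. ((1 - cos \<theta>)^j * cos (real (Suc (Suc m)) * \<theta>) + (1 - cos \<theta>)^j * cos (real m * \<theta>)) / 2)"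
    by (rule integral_cong) (simp only: e, simp add: algebra_simps)
  also have "\<dots> = (A j (Suc (Suc m)) + A j m) / 2"
    unfolding A_def
    by (simp only: Henstock_Kurzweil_Integration.integral_divide, subst integral_add) (auto intro!: integrable_cont continuous_intros)
  finally show ?thesis unfolding A_step by simp
qed

lemma A_closed: "A j m = Ac j m"
proof (induction j arbitrary: m)
  case 0 then show ?case by (simp add: A_0 Ac_def)
next
  case (Suc j)
  show ?case
  proof (cases m)
    case 0
    have b: "(2*j+2) choose (j+1) = 2 * ((2*j) choose j) + 2 * ((2*j) choose (j+1))"
    proof -
      have "(2*j+2) choose (j+1) = ((2*j+1) choose j) + ((2*j+1) choose (j+1))"
        using binomial_Suc_Suc[of "2*j+1" j] by simp
      moreover have "(2*j+1) choose j = (2*j+1) choose (j+1)"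
        using binomial_symmetric[of j "2*j+1"] by simp
      moreover have "(2*j+1) choose (j+1) = ((2*j) choose j) + ((2*j) choose (j+1))"
        by simp
      ultimately show ?thesis by simp
    qed
    have bb: "real ((2*j+2) choose (j+1)) = 2 * real ((2*j) choose j) + 2 * real ((2*j) choose (j+1))"
      using b by (simp only: of_nat_add of_nat_mult of_nat_numeral)
    have l: "Ac (Suc j) 0 = pi * real ((2*j+2) choose (j+1)) / (2 * 2^j)"
      by (simp add: Ac_def)
    have r: "Ac j 0 - Ac j 1 = pi * real ((2*j) choose j) / 2^j + pi * real ((2*j) choose (j+1)) / 2^j"
      by (simp add: Ac_def)
    show ?thesis unfolding 0 A_Suc_0 Suc.IH r l bb by (simp add: add_divide_distrib algebra_simps)
  next
    case (Suc m')
    have b: "(2*j+2) choose (j+m'+2) = ((2*j) choose (j+m')) + 2 * ((2*j) choose (j+m'+1)) + ((2*j) choose (j+m'+2))"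
    proof -
      have "(2*j+2) choose (j+m'+2) = ((2*j+1) choose (j+m'+1)) + ((2*j+1) choose (j+m'+2))"
        using binomial_Suc_Suc[of "2*j+1" "j+m'+1"] by simp
      then show ?thesis by simp
    qed
    then have bb: "real ((2*j+2) choose (j+m'+2)) = real ((2*j) choose (j+m')) + 2 * real ((2*j) choose (j+m'+1)) + real ((2*j) choose (j+m'+2))"
      by (simp only: of_nat_add of_nat_mult of_nat_numeral)
    have l: "Ac (Suc j) (Suc m') = - ((-1)^m' * pi * real ((2*j+2) choose (j+m'+2)) / (2 * 2^j))"
      by (simp add: Ac_def)
    have r: "Ac j (Suc m') - (Ac j (Suc (Suc m')) + Ac j m') / 2 =
       - ((-1)^m' * pi * (2 * real ((2*j) choose (j+m'+1)) + real ((2*j) choose (j+m'+2)) + real ((2*j) choose (j+m')))  / (2 * 2^j))"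
      by (simp add: Ac_def add_divide_distrib diff_divide_distrib algebra_simps)
    show ?thesis unfolding \<open>m = Suc m'\<close> A_Suc_Suc Suc.IH l r bb by (simp add: algebra_simps)
  qed
qed

definition Mc :: "nat \<Rightarrow> nat \<Rightarrow> real" where
  "Mc j n = (if n \<le> j then 2^(j+1) * (fact j)^2 / (fact (j-n) * fact (j+n+1)) else 0)"

lemma Mc_le: "n \<le> j \<Longrightarrow> j - n = a \<Longrightarrow> j + n + 1 = b \<Longrightarrow> j = c \<Longrightarrow> Mc j n = 2^(c+1) * (fact c)^2 / (fact a * fact b)"
  unfolding Mc_def by simp

lemma fact_plus1: "fact (m + 1) = (real m + 1) * (fact m :: real)"
  by (simp add: algebra_simps)

lemma fact_plus2: "fact (m + 2) = (real m + 2) * (real m + 1) * (fact m :: real)"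
  using fact_plus1[of "m+1"] fact_plus1[of m] by (simp add: algebra_simps)

lemma alg4:
  fixes a b c d n2 s t m :: real
  assumes "a > 0" "b > 0" "c > 0" "d > 0" "n2 > 0"
    and "b*a*n2 = s*(t - b*d) - m*(d*c)"
  shows "X/(d*c) = (s*(X*t/(b*a*d*c) - X/(a*c)) - m*(X/(b*a)))/n2"
proof -
  have h: "X*a*b*(b*a*n2) = X*a*b*(s*(t - b*d) - m*(d*c))" using assms(6) by simp
  show ?thesis using assms(1-5) h by (simp add: field_simps)
qed

lemma Mc_rec: "Mc j (n+2) = ((2 * real n + 3) * (Mc (j+1) (n+1) - Mc j (n+1)) - (real n + 1) * Mc j n) / (real n + 2)"
proof -
  consider "j < n" | "j = n" | "j = n + 1" | k where "j = n + 2 + k" 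
  proof -
    assume a: "j < n \<Longrightarrow> thesis" "j = n \<Longrightarrow> thesis" "j = n + 1 \<Longrightarrow> thesis"
      "\<And>k. j = n + 2 + k \<Longrightarrow> thesis"
    show thesis
    proof (cases "n + 2 \<le> j")
      case True then show thesis using a(4)[of "j - (n+2)"] by simp
    next
      case False then show thesis using a(1-3) by linarith
    qed
  qed
  then show ?thesis
  proof cases
    case 1 then show ?thesis by (simp add: Mc_def)
  next
    case 2
    define X where "X = (2^(n+1) * (fact n)^2 / fact (2*n+1) :: real)"
    define N where "N = real n"
    have e0: "Mc j (n+2) = 0" using 2 by (simp add: Mc_def)
    have e1: "Mc (j+1) (n+1) = X * (2 * (N+1)^2) / ((2*N+3)*(2*N+2))"
    proof -
      have "Mc (j+1) (n+1) = 2^((n+1)+1) * (fact (n+1))^2 / (fact 0 * fact ((2*n+1)+2))"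
        by (rule Mc_le) (use 2 in auto)
      then show ?thesis unfolding fact_plus2 fact_plus1 X_def N_def by (simp add: power2_eq_square mult_ac add_ac)
    qed
    have e2: "Mc j (n+1) = 0" using 2 by (simp add: Mc_def)
    have e3: "Mc j n = X"
    proof -
      have "Mc j n = 2^(n+1)*(fact n)^2/(fact 0 * fact (2*n+1))" by (rule Mc_le) (use 2 in auto)
      then show ?thesis by (simp add: X_def)
    qed
    have N: "N \<ge> 0" unfolding N_def by auto
    have p: "2*N+3 > 0" "2*N+2 > 0" "N+2 > 0" using N by auto
    have q: "2 * (N+1)^2 / ((2*N+3)*(2*N+2)) = (N+1) / (2*N+3)"
      using p by (simp add: divide_eq_eq power2_eq_square)
    have e1': "Mc (j+1) (n+1) = X * (N+1) / (2*N+3)" unfolding e1 using q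
      by (metis times_divide_eq_right)
    have "(2*N+3) * (X * (N+1) / (2*N+3)) = (N+1) * X" using p by simp
    then show ?thesis unfolding e0 e1' e2 e3 by (simp add: N_def)
  next
    case 3
    define X where "X = (2^(n+2) * (fact (n+1))^2 / fact (2*n+2) :: real)"
    define N where "N = real n"
    have N: "N \<ge> 0" unfolding N_def by auto
    have e0: "Mc j (n+2) = 0" using 3 by (simp add: Mc_def)
    have e1: "Mc (j+1) (n+1) = X * (2 * (N+2)^2) / ((2*N+4)*(2*N+3))"
    proof -
      have "Mc (j+1) (n+1) = 2^(((n+1)+1)+1) * (fact ((n+1)+1))^2 / (fact 1 * fact ((2*n+2)+2))"
        by (rule Mc_le) (use 3 in auto)
      then show ?thesis unfolding fact_plus2 fact_plus1 X_def N_def by (simp add: power2_eq_square mult_ac add_ac)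
    qed
    have e2: "Mc j (n+1) = X / (2*N+3)"
    proof -
      have "Mc j (n+1) = 2^((n+1)+1) * (fact (n+1))^2 / (fact 0 * fact ((2*n+2)+1))"
        by (rule Mc_le) (use 3 in auto)
      then show ?thesis unfolding fact_plus1 X_def N_def by (simp add: mult_ac add_ac)
    qed
    have e3: "Mc j n = X"
    proof -
      have "Mc j n = 2^((n+1)+1) * (fact (n+1))^2 / (fact 1 * fact (2*n+2))"
        by (rule Mc_le) (use 3 in auto)
      then show ?thesis unfolding X_def by simp
    qed
    have p: "2*N+3 > 0" "2*N+4 > 0" "N+2 > 0" using N by auto
    have q: "2 * (N+2)^2 / ((2*N+4)*(2*N+3)) = (N+2) / (2*N+3)"
      using p by (simp add: divide_eq_eq power2_eq_square)
    have e1': "Mc (j+1) (n+1) = X * (N+2) / (2*N+3)" unfolding e1 using q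
      by (metis times_divide_eq_right)
    have "X * (N+2) / (2*N+3) - X / (2*N+3) = X * (N+1) / (2*N+3)"
      by (simp add: diff_divide_distrib[symmetric] algebra_simps)
    then have "(2*N+3) * (X * (N+2) / (2*N+3) - X / (2*N+3)) = (N+1) * X" using p by simp
    then show ?thesis unfolding e0 e1' e2 e3 by (simp add: N_def)
  next
    case 4
    define X where "X = (2^(j+1) * (fact j)^2 / (fact k * fact (2*n+k+3)) :: real)"
    define N where "N = real n"
    define K where "K = real k"
    have N: "N \<ge> 0" "K \<ge> 0" unfolding N_def K_def by auto
    have e0: "Mc j (n+2) = X / ((2*N+K+5) * (2*N+K+4))"
    proof -
      have "Mc j (n+2) = 2^(j+1) * (fact j)^2 / (fact k * fact ((2*n+k+3)+2))"
        by (rule Mc_le) (use 4 in auto)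
      then show ?thesis unfolding fact_plus2 X_def N_def K_def by (simp add: mult_ac add_ac)
    qed
    have e1: "Mc (j+1) (n+1) = X * (2 * (N+K+3)^2) / ((K+2)*(K+1)*(2*N+K+5)*(2*N+K+4))"
    proof -
      have "Mc (j+1) (n+1) = 2^((j+1)+1) * (fact (j+1))^2 / (fact (k+2) * fact ((2*n+k+3)+2))"
        by (rule Mc_le) (use 4 in auto)
      then show ?thesis unfolding fact_plus2 fact_plus1 X_def N_def K_def using 4
        by (simp add: power2_eq_square mult_ac add_ac)
    qed
    have e2: "Mc j (n+1) = X / ((K+1)*(2*N+K+4))"
    proof -
      have "Mc j (n+1) = 2^(j+1) * (fact j)^2 / (fact (k+1) * fact ((2*n+k+3)+1))"
        by (rule Mc_le) (use 4 in auto)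
      then show ?thesis unfolding fact_plus1 X_def N_def K_def by (simp add: mult_ac add_ac)
    qed
    have e3: "Mc j n = X / ((K+2)*(K+1))"
    proof -
      have "Mc j n = 2^(j+1) * (fact j)^2 / (fact (k+2) * fact (2*n+k+3))"
        by (rule Mc_le) (use 4 in auto)
      then show ?thesis unfolding fact_plus2 X_def N_def K_def by (simp add: mult_ac add_ac)
    qed
    have p: "2*N+K+5 > 0" "2*N+K+4 > 0" "K+2 > 0" "K+1 > 0" "N+2 > 0" using N by auto
    have alg: "X / ((2*N+K+5) * (2*N+K+4)) = ((2*N+3) * (X * (2 * (N+K+3)^2) / ((K+2)*(K+1)*(2*N+K+5)*(2*N+K+4)) - X / ((K+1)*(2*N+K+4))) - (N+1) * (X / ((K+2)*(K+1)))) / (N+2)"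
      by (rule alg4) (use N in \<open>auto simp: algebra_simps power2_eq_square\<close>)
    from alg show ?thesis unfolding e0 e1 e2 e3 by (simp add: N_def)
  qed
qed

definition Mi :: "nat \<Rightarrow> nat \<Rightarrow> real" where
  "Mi j n = integral {-1..1} (\<lambda>x. (1+x)^j * legP n x)"

lemma integrable_cont1: "continuous_on {-1..1} (g::real\<Rightarrow>real) \<Longrightarrow> g integrable_on {-1..1}"
  by (rule integrable_continuous_interval)

lemma int_pow: "integral {-1..1} (\<lambda>x::real. (1+x)^j) = 2^(j+1) / (real j + 1)"
proof -
  have d: "((\<lambda>x::real. (1+x)^(Suc j) / real (Suc j)) has_real_derivative (1+x)^j) (at x within S)" for x S
  proof -
    have "((\<lambda>x::real. (1+x)^(Suc j)) has_real_derivative real (Suc j) * (1+x)^j) (at x within S)"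
      by (rule derivative_eq_intros refl | simp)+
    from DERIV_cdivide[OF this, of "real (Suc j)"] show ?thesis by (simp del: of_nat_Suc)
  qed
  have "((\<lambda>x::real. (1+x)^j) has_integral ((1+1)^(Suc j)/real (Suc j) - (1+(-1))^(Suc j)/real (Suc j))) {-1..1}"
    by (rule fundamental_theorem_of_calculus)
       (auto intro!: d simp only: has_real_derivative_iff_has_vector_derivative[symmetric])
  then show ?thesis by (simp add: integral_unique)
qed

lemma canc2: assumes "(F::real) > 0" "J > 0" shows "a*(J*F)^2/(F*((J+2)*(J+1)*J*F)) = a*J/((J+1)*(J+2))"
proof -
  have n: "F*((J+2)*(J+1)*J*F) \<noteq> 0" "(J+1)*(J+2) \<noteq> 0" using assms by (auto simp: add_pos_pos)
  show ?thesis by (subst frac_eq_eq[OF n]) (simp add: algebra_simps power2_eq_square)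
qed

lemma canc1: "(F::real) > 0 \<Longrightarrow> b > 0 \<Longrightarrow> a * F^2/(F*(b*F)) = a/b" by (simp add: field_simps power2_eq_square)

lemma Mi_0: "Mi j 0 = Mc j 0"
proof -
  have "Mc j 0 = 2^(j+1) * (fact j)^2 / (fact j * fact (j+1))" by (simp add: Mc_def)
  also have "\<dots> = 2^(j+1) / (real j + 1)"
    unfolding fact_plus1 by (rule canc1) auto
  finally show ?thesis by (simp add: Mi_def int_pow)
qed

lemma Mi_1: "Mi j 1 = Mc j 1"
proof -
  have "Mi j 1 = integral {-1..1} (\<lambda>x::real. (1+x)^(j+1) - (1+x)^j)"
    unfolding Mi_def by (rule integral_cong) (simp add: algebra_simps)
  also have "\<dots> = 2^(j+2)/(real j + 2) - 2^(j+1)/(real j + 1)"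
    by (subst integral_diff) (auto intro!: integrable_cont1 continuous_intros simp only: int_pow[of "j+1"] int_pow[of j], simp)
  also have "\<dots> = 2^(j+1) * real j / ((real j + 1)*(real j + 2))" by (simp add: field_simps)
  also have "\<dots> = Mc j 1"
  proof (cases j)
    case 0 then show ?thesis by (simp add: Mc_def)
  next
    case (Suc i)
    have "Mc j 1 = 2^(j+1) * (fact j)^2 / (fact i * fact (i+3))"
      by (rule Mc_le) (use Suc in auto)
    also have "\<dots> = 2^(j+1) * real j / ((real j + 1)*(real j + 2))"
    proof -
      have f: "fact j = real j * fact i" using Suc by simp
      have "fact (i+3) = fact (j+2)" using Suc by (simp add: eval_nat_numeral)
      also have "\<dots> = (real j + 2) * (real j + 1) * real j * (fact i :: real)"
        unfolding fact_plus2 f by (simp add: algebra_simps)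
      finally have f2: "fact (i+3) = (real j + 2) * (real j + 1) * real j * (fact i :: real)" .
      show ?thesis unfolding f f2 by (rule canc2) (use Suc in auto)
    qed
    finally show ?thesis by (simp add: add.commute)
  qed
  finally show ?thesis .
qed

lemma Mi_rec: "Mi j (n+2) = ((2 * real n + 3) * (Mi (j+1) (n+1) - Mi j (n+1)) - (real n + 1) * Mi j n) / (real n + 2)"
proof -
  have "Mi j (n+2) = integral {-1..1} (\<lambda>x. ((2*n+3) * ((1+x)^(j+1) * legP (n+1) x - (1+x)^j * legP (n+1) x)
      - (n+1) * ((1+x)^j * legP n x)) / (n+2))"
    unfolding Mi_def by (rule integral_cong) (simp add: algebra_simps add_divide_distrib diff_divide_distrib)
  also have "\<dots> = integral {-1..1} (\<lambda>x. ((2*n+3) * ((1+x)^(j+1) * legP (n+1) x - (1+x)^j * legP (n+1) x)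
      - (n+1) * ((1+x)^j * legP n x))) / (n+2)"
    by (rule Henstock_Kurzweil_Integration.integral_divide)
  also have "integral {-1..1} (\<lambda>x. ((2*n+3) * ((1+x)^(j+1) * legP (n+1) x - (1+x)^j * legP (n+1) x)
      - (n+1) * ((1+x)^j * legP n x))) = integral {-1..1} (\<lambda>x. (2*n+3) * ((1+x)^(j+1) * legP (n+1) x - (1+x)^j * legP (n+1) x))
      - integral {-1..1} (\<lambda>x. (n+1) * ((1+x)^j * legP n x))"
    by (rule integral_diff) (auto intro!: integrable_cont1 continuous_intros)
  also have "integral {-1..1} (\<lambda>x. (2*n+3) * ((1+x)^(j+1) * legP (n+1) x - (1+x)^j * legP (n+1) x))
     = (2*n+3) * integral {-1..1} (\<lambda>x. ((1+x)^(j+1) * legP (n+1) x - (1+x)^j * legP (n+1) x))"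
    by (rule Henstock_Kurzweil_Integration.integral_mult_right)
  also have "integral {-1..1} (\<lambda>x. ((1+x)^(j+1) * legP (n+1) x - (1+x)^j * legP (n+1) x)) = Mi (j+1) (n+1) - Mi j (n+1)"
    unfolding Mi_def by (rule integral_diff) (auto intro!: integrable_cont1 continuous_intros)
  also have "integral {-1..1} (\<lambda>x. (n+1) * ((1+x)^j * legP n x)) = (n+1) * Mi j n"
    unfolding Mi_def by (rule Henstock_Kurzweil_Integration.integral_mult_right)
  finally show ?thesis by (simp add: add.commute)
qed

lemma Mi_closed: "Mi j n = Mc j n"
proof -
  have "\<forall>j. Mi j n = Mc j n \<and> Mi j (n+1) = Mc j (n+1)"
  proof (induction n)
    case 0 then show ?case using Mi_0 Mi_1 by (simp del: One_nat_def)
  next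
    case (Suc n)
    then show ?case using Mi_rec[of _ n] Mc_rec[of _ n] by simp
  qed
  then show ?thesis by blast
qed

lemma c3:
  fixes p F2 Fj P Q E1 E2 K1 N Jj \<sigma> :: real
  assumes pos: "p>0" "F2>0" "Fj>0" "P>0" "Q>0" "E1>0" "E2>0" "K1>0"
    and key: "N*E2 + (N+1)*K1 = E1*Jj" and s: "\<sigma>*\<sigma> = 1"
  shows "pi*F2/(Fj*Fj)/p/p * Jj * (2*p*(Fj*Fj)/((K1*Q)*(E2*P))) =
     2/E1 * \<sigma> * (N*(\<sigma>*pi*F2/(P*(K1*Q))/p) - (N+1)*(-\<sigma>*pi*F2/((E2*P)*Q)/p))"
proof -
  have "2/E1 * \<sigma> * (N*(\<sigma>*pi*F2/(P*(K1*Q))/p) - (N+1)*(-\<sigma>*pi*F2/((E2*P)*Q)/p))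
     = 2 * (\<sigma>*\<sigma>) * pi * F2 * (N*E2 + (N+1)*K1) / (E1 * P * K1 * Q * E2 * p)"
    using pos by (simp add: field_simps)
  also have "\<dots> = 2 * pi * F2 * Jj / (P * K1 * Q * E2 * p)"
    unfolding key s using pos by (simp add: field_simps)
  also have "\<dots> = pi*F2/(Fj*Fj)/p/p * Jj * (2*p*(Fj*Fj)/((K1*Q)*(E2*P)))"
    using pos by (simp add: field_simps)
  finally show ?thesis by simp
qed
lemma c2:
  fixes p F2 Fj E J \<sigma> :: real
  assumes pos: "p>0" "F2>0" "Fj>0" "E>0" and s: "\<sigma>*\<sigma> = 1"
  shows "pi * F2 / (Fj * Fj) / p / p * J * (2 * p * (Fj * Fj) / (E * F2)) =
       2 / E * \<sigma> * (J * (\<sigma> * pi / p) - (J + 1) * 0)"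
proof -
  have "2 / E * \<sigma> * (J * (\<sigma> * pi / p) - (J + 1) * 0) = 2 * (\<sigma>*\<sigma>) * J * pi / (E * p)" by simp
  also have "\<dots> = pi * F2 / (Fj * Fj) / p / p * J * (2 * p * (Fj * Fj) / (E * F2))"
    unfolding s using pos by (simp add: field_simps)
  finally show ?thesis by simp
qed

lemma mono_identity:
  "Ac j 0 / 2^j * real j * Mc j n =
   2 / (2 * real n + 1) * (-1)^n * (real n * Ac j n - (real n + 1) * Ac j (n+1))"
proof -
  consider "j < n" | "j = n" | k where "j = n + 1 + k"
    by (metis add.commute add_Suc_right le_Suc_ex linorder_not_le nat_less_le Suc_eq_plus1 not_less_eq_eq add_Suc)
  then show ?thesis
  proof cases
    case 1
    then show ?thesis by (simp add: Mc_def Ac_def binomial_eq_0)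
  next
    case 2
    define p where "p = (2::real)^j"
    define F2 where "F2 = (fact (2*j) :: real)"
    define Fj where "Fj = (fact j :: real)"
    define J where "J = real j"
    have pos: "p > 0" "F2 > 0" "Fj > 0" "J \<ge> 0" by (auto simp: p_def F2_def Fj_def J_def)
    have a0: "Ac j 0 = pi * F2 / (Fj * Fj) / p"
      by (simp add: Ac_def binomial_fact F2_def Fj_def p_def)
    have a1: "Ac j n = (-1)^j * pi / p" using 2 by (simp add: Ac_def p_def flip: mult_2)
    have a2: "Ac j (n+1) = 0" using 2 by (simp add: Ac_def binomial_eq_0)
    have m: "Mc j n = 2 * p * (Fj * Fj) / ((2*J+1) * F2)"
    proof -
      have "Mc j n = 2^(j+1) * (fact j)^2 / (fact 0 * fact ((2*j)+1))"
        by (rule Mc_le) (use 2 in auto)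
      then show ?thesis unfolding fact_plus1 by (simp add: p_def F2_def Fj_def J_def power2_eq_square)
    qed
    have s: "(-1::real)^j * (-1)^j = 1" by (simp flip: power_add)
    have nJ: "real n = J" "(-1::real)^n = (-1)^j" using 2 by (auto simp: J_def)
    have "pi * F2 / (Fj * Fj) / p / p * J * (2 * p * (Fj * Fj) / ((2*J+1) * F2)) =
       2 / (2 * J + 1) * (-1)^j * (J * ((-1)^j * pi / p) - (J + 1) * 0)"
      by (rule c2) (use pos s in auto)
    then show ?thesis unfolding a0 a1 a2 m nJ p_def[symmetric] by (simp add: J_def)
  next
    case 3
    define p where "p = (2::real)^j"
    define F2 where "F2 = (fact (2*j) :: real)"
    define Fj where "Fj = (fact j :: real)"
    define P where "P = (fact (2*n+k+1) :: real)"
    define Q where "Q = (fact k :: real)"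
    define N where "N = real n"
    define K where "K = real k"
    have pos: "p > 0" "F2 > 0" "Fj > 0" "P > 0" "Q > 0" "N \<ge> 0" "K \<ge> 0"
      by (auto simp: p_def F2_def Fj_def P_def Q_def N_def K_def)
    have jJ: "real j = N + K + 1" using 3 by (simp add: N_def K_def)
    have a0: "Ac j 0 = pi * F2 / (Fj * Fj) / p"
      by (simp add: Ac_def binomial_fact F2_def Fj_def p_def)
    have a1: "Ac j n = (-1)^n * pi * F2 / (P * ((K+1) * Q)) / p"
    proof -
      have "real ((2*j) choose (j+n)) = fact (2*j) / (fact (j+n) * fact (2*j-(j+n)))"
        by (rule binomial_fact) (use 3 in simp)
      moreover have "j+n = 2*n+k+1" "2*j-(j+n) = k+1" using 3 by simp_all
      ultimately have c: "real ((2*j) choose (j+n)) = fact (2*j) / (fact (2*n+k+1) * fact (k+1))" by (simp only:)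
      show ?thesis unfolding Ac_def c P_def[symmetric] unfolding fact_plus1 F2_def[symmetric] Q_def[symmetric] p_def[symmetric] K_def[symmetric]
        by (simp del: fact_Suc)
    qed
    have a2: "Ac j (n+1) = (-1)^(n+1) * pi * F2 / (((2*N+K+2) * P) * Q) / p"
    proof -
      have "real ((2*j) choose (j+(n+1))) = fact (2*j) / (fact (j+(n+1)) * fact (2*j-(j+(n+1))))"
        by (rule binomial_fact) (use 3 in simp)
      moreover have "j+(n+1) = (2*n+k+1)+1" "2*j-(j+(n+1)) = k" using 3 by simp_all
      ultimately have "real ((2*j) choose (j+(n+1))) = fact (2*j) / (fact ((2*n+k+1)+1) * fact k)" by (simp only:)
      then have c: "real ((2*j) choose (j+(n+1))) = fact (2*j) / (fact ((2*n+k+1)+1) * fact k)" .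
      have e: "real (2*n+k+1) = 2*N+K+1" by (simp add: N_def K_def)
      show ?thesis unfolding Ac_def c fact_plus1[of "2*n+k+1"] unfolding F2_def[symmetric] P_def[symmetric] Q_def[symmetric] p_def[symmetric] e
        by (simp del: fact_Suc add: algebra_simps)
    qed
    have m: "Mc j n = 2 * p * (Fj * Fj) / (((K+1) * Q) * ((2*N+K+2) * P))"
    proof -
      have "Mc j n = 2^(j+1) * (fact j)^2 / (fact (k+1) * fact ((2*n+k+1)+1))"
        by (rule Mc_le) (use 3 in auto)
      then have c: "Mc j n = 2^(j+1) * (fact j)^2 / (fact (k+1) * fact ((2*n+k+1)+1))" .
      have e: "real (2*n+k+1) = 2*N+K+1" by (simp add: N_def K_def)
      have pp: "(2::real)^(j+1) = 2*p" by (simp add: p_def)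
      show ?thesis unfolding c pp fact_plus1[of k] fact_plus1[of "2*n+k+1"]
        unfolding Fj_def[symmetric] P_def[symmetric] Q_def[symmetric] p_def[symmetric] e K_def[symmetric]
        by (simp del: fact_Suc add: power2_eq_square algebra_simps)
    qed
    have s: "(-1::real)^n * (-1)^n = 1" by (simp flip: power_add)
    have key: "N * (2*N+K+2) + (N+1) * (K+1) = (2*N+1) * (N+K+1)" by (simp add: algebra_simps)
    have "pi * F2 / (Fj * Fj) / p / p * (N + K + 1) * (2 * p * (Fj * Fj) / (((K+1) * Q) * ((2*N+K+2) * P))) =
      2 / (2 * N + 1) * (-1)^n * (N * ((-1)^n * pi * F2 / (P * ((K+1) * Q)) / p) - (N + 1) * ((-1)^(n+1) * pi * F2 / (((2*N+K+2) * P) * Q) / p))"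
      using c3[of p F2 Fj P Q "2*N+1" "2*N+K+2" "K+1" N "N+K+1" "(-1)^n"] pos s key by simp
    then show ?thesis unfolding a0 a1 a2 m jJ p_def[symmetric] by (simp add: N_def)
  qed
qed

definition Phi :: "nat \<Rightarrow> (real \<Rightarrow> real) \<Rightarrow> real" where
  "Phi n f = 2 * U f 1 - integral {-1..1} (\<lambda>x. U f x * rP n x)"

definition Psi :: "nat \<Rightarrow> (real \<Rightarrow> real) \<Rightarrow> real" where
  "Psi n f = 2 / (2 * real n + 1) * (-1)^n * (real n * Ccos f n - (real n + 1) * Ccos f (n+1))"

lemma cont_comp_U:
  assumes "continuous_on {-1..1} f" "x \<in> {-1..1}"
  shows "continuous_on {0..pi} (\<lambda>\<phi>. f (-1 + (1+x)*(1-cos \<phi>)/2))"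
  by (rule continuous_on_compose2[OF assms(1)]) (use assms(2) in \<open>auto intro!: continuous_intros arg_bound\<close>)

lemma cont_comp_C:
  assumes "continuous_on {-1..1} f"
  shows "continuous_on {0..pi} (\<lambda>\<theta>. f (- cos \<theta>) * cos (real m * \<theta>))"
  by (intro continuous_intros continuous_on_compose2[OF assms(1)]) auto

lemma U_lin:
  assumes f: "continuous_on {-1..1} f" and g: "continuous_on {-1..1} g" and x: "x \<in> {-1..1}"
  shows "U (\<lambda>t. a * f t + g t) x = a * U f x + U g x"
proof -
  have i1: "(\<lambda>\<phi>. a * f (-1 + (1+x)*(1-cos \<phi>)/2)) integrable_on {0..pi}"
    by (rule integrable_cont) (intro continuous_intros cont_comp_U[OF f x])
  have i2: "(\<lambda>\<phi>. g (-1 + (1+x)*(1-cos \<phi>)/2)) integrable_on {0..pi}"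
    by (rule integrable_cont[OF cont_comp_U[OF g x]])
  show ?thesis unfolding U_def
    by (subst integral_add[OF i1 i2]) simp
qed

lemma Ccos_lin:
  assumes f: "continuous_on {-1..1} f" and g: "continuous_on {-1..1} g"
  shows "Ccos (\<lambda>t. a * f t + g t) m = a * Ccos f m + Ccos g m"
proof -
  have "Ccos (\<lambda>t. a * f t + g t) m = integral {0..pi} (\<lambda>\<theta>. a * (f (- cos \<theta>) * cos (real m * \<theta>)) + g (- cos \<theta>) * cos (real m * \<theta>))"
    unfolding Ccos_def by (rule integral_cong) (simp add: algebra_simps)
  also have "\<dots> = a * Ccos f m + Ccos g m"
    unfolding Ccos_def
    by (subst integral_add) (auto intro!: integrable_cont cont_comp_C[OF f] cont_comp_C[OF g] continuous_intros)
  finally show ?thesis .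
qed

lemma Phi_lin:
  assumes f: "continuous_on {-1..1} f" and g: "continuous_on {-1..1} g"
  shows "Phi n (\<lambda>t. a * f t + g t) = a * Phi n f + Phi n g"
proof -
  have "integral {-1..1} (\<lambda>x. U (\<lambda>t. a * f t + g t) x * rP n x) = integral {-1..1} (\<lambda>x. a * (U f x * rP n x) + U g x * rP n x)"
    by (rule integral_cong) (subst U_lin[OF f g], simp, simp add: algebra_simps)
  also have "\<dots> = a * integral {-1..1} (\<lambda>x. U f x * rP n x) + integral {-1..1} (\<lambda>x. U g x * rP n x)"
    by (subst integral_add) (auto intro!: integrable_cont1 cont_U[OF f] cont_U[OF g] continuous_intros)
  moreover have "U (\<lambda>t. a * f t + g t) 1 = a * U f 1 + U g 1" by (rule U_lin[OF f g]) simp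
  ultimately show ?thesis unfolding Phi_def by (simp add: algebra_simps)
qed

lemma Psi_lin:
  assumes f: "continuous_on {-1..1} f" and g: "continuous_on {-1..1} g"
  shows "Psi n (\<lambda>t. a * f t + g t) = a * Psi n f + Psi n g"
proof -
  define c where "c = 2 / (2 * real n + 1) * (-1)^n"
  have "\<And>X Y Z W. c*(real n*(a*X+Y) - (real n+1)*(a*Z+W)) = a*(c*(real n*X-(real n+1)*Z)) + c*(real n*Y-(real n+1)*W)"
    by (simp add: algebra_simps)
  then show ?thesis unfolding Psi_def Ccos_lin[OF f g] c_def[symmetric] by simp
qed

lemma int_rP_mono: "integral {-1..1} (\<lambda>x. (1+x)^j * rP n x) = 2^(j+1) - real j * Mi j n"
proof -
  have d: "((\<lambda>x. (1+x)^(Suc j) * legP n x) has_vector_derivative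
      ((1+x)^j * rP n x + real j * ((1+x)^j * legP n x))) (at x)" for x
  proof -
    have p: "((\<lambda>x::real. (1+x)^(Suc j)) has_real_derivative real (Suc j) * (1+x)^j) (at x)"
      by (rule derivative_eq_intros refl | simp)+
    have "((\<lambda>x. (1+x)^(Suc j) * legP n x) has_real_derivative
      (real (Suc j) * (1+x)^j * legP n x + dP n x * (1+x)^(Suc j))) (at x)"
      by (rule DERIV_mult[OF p legP_deriv0])
    then show ?thesis unfolding has_real_derivative_iff_has_vector_derivative[symmetric] rP_def
      by (simp add: algebra_simps)
  qed
  have "((\<lambda>x. (1+x)^j * rP n x + real j * ((1+x)^j * legP n x)) has_integral
      ((1+1)^(Suc j) * legP n 1 - (1+(-1))^(Suc j) * legP n (-1))) {-1..1}"
    by (rule fundamental_theorem_of_calculus) (simp, rule has_vector_derivative_at_within[OF d])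
  then have "integral {-1..1} (\<lambda>x. (1+x)^j * rP n x + real j * ((1+x)^j * legP n x)) = 2^(j+1)"
    by (simp only: integral_unique legP_1) simp
  moreover have "integral {-1..1} (\<lambda>x. (1+x)^j * rP n x + real j * ((1+x)^j * legP n x)) =
      integral {-1..1} (\<lambda>x. (1+x)^j * rP n x) + real j * Mi j n"
    unfolding Mi_def by (subst integral_add) (auto intro!: integrable_cont1 continuous_intros)
  ultimately show ?thesis by simp
qed

lemma U_mono: "U (\<lambda>t. (1+t)^j) x = (1+x)^j * (A j 0 / 2^j)"
proof -
  have "U (\<lambda>t. (1+t)^j) x = integral {0..pi} (\<lambda>\<phi>. ((1+x)^j / 2^j) * ((1 - cos \<phi>)^j * cos (real 0 * \<phi>)))"
    unfolding U_def by (rule integral_cong) (simp add: power_mult_distrib power_divide)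
  also have "\<dots> = (1+x)^j * (A j 0 / 2^j)"
    unfolding A_def by simp
  finally show ?thesis .
qed

lemma Phi_mono: "Phi n (\<lambda>t. (1+t)^j) = A j 0 / 2^j * real j * Mi j n"
proof -
  have "integral {-1..1} (\<lambda>x. U (\<lambda>t. (1+t)^j) x * rP n x) = integral {-1..1} (\<lambda>x. (A j 0 / 2^j) * ((1+x)^j * rP n x))"
    unfolding U_mono by (rule integral_cong) simp
  also have "\<dots> = (A j 0 / 2^j) * integral {-1..1} (\<lambda>x. (1+x)^j * rP n x)"
    by (rule Henstock_Kurzweil_Integration.integral_mult_right)
  finally have e: "integral {-1..1} (\<lambda>x. U (\<lambda>t. (1+t)^j) x * rP n x) = (A j 0 / 2^j) * integral {-1..1} (\<lambda>x. (1+x)^j * rP n x)" .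
  show ?thesis unfolding Phi_def e unfolding int_rP_mono U_mono
    by (simp add: algebra_simps)
qed

lemma Psi_mono: "Psi n (\<lambda>t. (1+t)^j) = 2 / (2 * real n + 1) * (-1)^n * (real n * A j n - (real n + 1) * A j (n+1))"
  unfolding Psi_def Ccos_def A_def by simp

lemma Phi_Psi_mono: "Phi n (\<lambda>t. (1+t)^j) = Psi n (\<lambda>t. (1+t)^j)"
  unfolding Phi_mono Psi_mono A_closed Mi_closed by (rule mono_identity)

lemma Phi_zero: "Phi n (\<lambda>t. 0) = 0" by (simp add: Phi_def U_def)
lemma Psi_zero: "Psi n (\<lambda>t. 0) = 0" by (simp add: Psi_def Ccos_def)

lemma Phi_Psi_sum: "Phi n (\<lambda>t. \<Sum>i<N. c i * (1+t)^i) = Psi n (\<lambda>t. \<Sum>i<N. c i * (1+t)^i)"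
proof (induction N)
  case 0 then show ?case by (simp add: Phi_zero Psi_zero)
next
  case (Suc N)
  have fe: "(\<lambda>t. \<Sum>i<Suc N. c i * (1+t)^i) = (\<lambda>t. c N * (1+t)^N + (\<Sum>i<N. c i * (1+t)^i))"
    by (simp add: add.commute)
  have c1: "continuous_on {-1..1} (\<lambda>t::real. (1+t)^N)" by (intro continuous_intros)
  have c2: "continuous_on {-1..1} (\<lambda>t::real. \<Sum>i<N. c i * (1+t)^i)" by (intro continuous_intros)
  show ?case unfolding fe Phi_lin[OF c1 c2] Psi_lin[OF c1 c2] Suc.IH Phi_Psi_mono ..
qed

lemma Phi_Psi_poly: "Phi n (poly p) = Psi n (poly p)"
proof -
  define q where "q = pcompose p [:-1, 1:]"
  have "poly p t = (\<Sum>i<Suc (degree q). coeff q i * (1+t)^i)" for t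
  proof -
    have "poly p t = poly q (1+t)" by (simp add: q_def poly_pcompose)
    also have "\<dots> = (\<Sum>i\<le>degree q. coeff q i * (1+t)^i)" by (rule poly_altdef)
    finally show ?thesis by (simp add: lessThan_Suc_atMost)
  qed
  then have "poly p = (\<lambda>t. \<Sum>i<Suc (degree q). coeff q i * (1+t)^i)" by auto
  then show ?thesis using Phi_Psi_sum[of n "coeff q" "Suc (degree q)"] by (simp only:)
qed

lemma rpf_poly:
  fixes g :: "real \<Rightarrow> real"
  assumes "real_polynomial_function g"
  shows "\<exists>p. g = poly p"
  using assms
proof (induction rule: real_polynomial_function.induct)
  case (linear f)
  then obtain c where "f = (\<lambda>x. x * c)" using real_bounded_linear by blast
  then have "f = poly [:0, c:]" by (auto simp: fun_eq_iff)
  then show ?case by blast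
next
  case (const c)
  have "(\<lambda>x::real. c) = poly [:c:]" by auto
  then show ?case by blast
next
  case (add f g)
  then obtain p q where "f = poly p" "g = poly q" by blast
  then have "(\<lambda>x. f x + g x) = poly (p + q)" by (auto simp: fun_eq_iff)
  then show ?case by blast
next
  case (mult f g)
  then obtain p q where "f = poly p" "g = poly q" by blast
  then have "(\<lambda>x. f x * g x) = poly (p * q)" by (auto simp: fun_eq_iff)
  then show ?case by blast
qed

lemma U_bound:
  assumes h: "continuous_on {-1..1} h" and hb: "\<And>t. t \<in> {-1..1} \<Longrightarrow> \<bar>h t\<bar> \<le> e" and x: "x \<in> {-1..1}"
  shows "\<bar>U h x\<bar> \<le> e * pi"
proof -
  have "norm (U h x) \<le> e * (pi - 0)" unfolding U_def
  proof (rule integral_bound)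
    show "continuous_on {0..pi} (\<lambda>\<phi>. h (-1 + (1+x)*(1-cos \<phi>)/2))" by (rule cont_comp_U[OF h x])
    fix t assume "t \<in> {0..pi}"
    show "norm (h (-1 + (1+x)*(1-cos t)/2)) \<le> e" using hb[OF arg_range[OF x]] by simp
  qed simp
  then show ?thesis by simp
qed

lemma Ccos_bound:
  assumes h: "continuous_on {-1..1} h" and hb: "\<And>t. t \<in> {-1..1} \<Longrightarrow> \<bar>h t\<bar> \<le> e"
  shows "\<bar>Ccos h m\<bar> \<le> e * pi"
proof -
  have "norm (Ccos h m) \<le> e * (pi - 0)" unfolding Ccos_def
  proof (rule integral_bound)
    fix t assume "t \<in> {0..pi}"
    have "\<bar>h (- cos t)\<bar> \<le> e" by (rule hb) auto
    moreover have "\<bar>cos (real m * t)\<bar> \<le> 1" by simp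
    ultimately have "\<bar>h (- cos t)\<bar> * \<bar>cos (real m * t)\<bar> \<le> e * 1"
      by (intro mult_mono) auto
    then show "norm (h (- cos t) * cos (real m * t)) \<le> e"
      by (simp add: abs_mult)
  qed (auto intro!: cont_comp_C[OF h])
  then show ?thesis by simp
qed

lemma Psi_bound:
  assumes h: "continuous_on {-1..1} h" and hb: "\<And>t. t \<in> {-1..1} \<Longrightarrow> \<bar>h t\<bar> \<le> e"
  shows "\<bar>Psi n h\<bar> \<le> 2 * e * pi"
proof -
  define a where "a = Ccos h n"
  define b where "b = Ccos h (n+1)"
  have a: "\<bar>a\<bar> \<le> e * pi" unfolding a_def by (rule Ccos_bound[OF h hb])
  have b: "\<bar>b\<bar> \<le> e * pi" unfolding b_def by (rule Ccos_bound[OF h hb])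
  have "\<bar>real n * a - (real n + 1) * b\<bar> \<le> \<bar>real n * a\<bar> + \<bar>(real n + 1) * b\<bar>"
    by (rule abs_triangle_ineq4)
  also have "\<dots> = real n * \<bar>a\<bar> + (real n + 1) * \<bar>b\<bar>" by (simp add: abs_mult)
  also have "\<dots> \<le> real n * (e * pi) + (real n + 1) * (e * pi)"
    using a b by (intro add_mono mult_left_mono) auto
  finally have c: "\<bar>real n * a - (real n + 1) * b\<bar> \<le> (2 * real n + 1) * (e * pi)" by (simp add: algebra_simps)
  have "\<bar>Psi n h\<bar> = 2 / (2 * real n + 1) * \<bar>real n * a - (real n + 1) * b\<bar>"
    unfolding Psi_def a_def[symmetric] b_def[symmetric] by (simp add: abs_mult)
  also have "\<dots> \<le> 2 / (2 * real n + 1) * ((2 * real n + 1) * (e * pi))"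
    by (rule mult_left_mono[OF c]) simp
  also have "\<dots> = 2 * e * pi" by simp
  finally show ?thesis .
qed

lemma Phi_bound:
  assumes h: "continuous_on {-1..1} h" and hb: "\<And>t. t \<in> {-1..1} \<Longrightarrow> \<bar>h t\<bar> \<le> e"
    and R: "\<And>x. x \<in> {-1..1} \<Longrightarrow> \<bar>rP n x\<bar> \<le> R"
  shows "\<bar>Phi n h\<bar> \<le> 2 * e * pi + (e * pi * R) * 2"
proof -
  have "norm (integral {-1..1} (\<lambda>x. U h x * rP n x)) \<le> (e * pi * R) * (1 - (-1))"
  proof (rule integral_bound)
    fix x :: real assume x: "x \<in> {-1..1}"
    have "\<bar>U h x\<bar> \<le> e * pi" by (rule U_bound[OF h hb x])
    then show "norm (U h x * rP n x) \<le> e * pi * R"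
      using R[OF x] by (simp add: abs_mult) (rule mult_mono, auto)
  qed (auto intro!: continuous_intros cont_U[OF h])
  moreover have "\<bar>U h 1\<bar> \<le> e * pi" by (rule U_bound[OF h hb]) auto
  ultimately show ?thesis unfolding Phi_def by (simp add: abs_mult)
qed

lemma Phi_Psi:
  assumes f: "continuous_on {-1..1} f"
  shows "Phi n f = Psi n f"
proof (rule ccontr)
  assume ne: "Phi n f \<noteq> Psi n f"
  define d where "d = \<bar>Phi n f - Psi n f\<bar>"
  have d: "d > 0" using ne by (simp add: d_def)
  have "bounded ((\<lambda>x. rP n x) ` {-1..1})"
    by (rule compact_imp_bounded[OF compact_continuous_image[OF cont_rP compact_Icc]])
  then obtain R0 where "\<forall>y\<in>(\<lambda>x. rP n x) ` {-1..1}. norm y \<le> R0" by (auto simp: bounded_iff)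
  then have R0: "\<And>x. x \<in> {-1..1} \<Longrightarrow> \<bar>rP n x\<bar> \<le> R0" by auto
  define R where "R = max R0 0"
  have R: "\<And>x. x \<in> {-1..1} \<Longrightarrow> \<bar>rP n x\<bar> \<le> R" and R0': "R \<ge> 0"
    using R0 unfolding R_def by (meson atLeastAtMost_iff max.coboundedI1) simp
  define C where "C = 4 * pi + 2 * pi * R"
  have C: "C > 0" unfolding C_def using R0' pi_gt_zero by (intro add_pos_nonneg) auto
  define e where "e = d / (2 * C)"
  have e: "e > 0" unfolding e_def using d C by simp
  obtain g where g: "real_polynomial_function g" "\<And>x. x \<in> {-1..1} \<Longrightarrow> \<bar>f x - g x\<bar> < e"
    using Stone_Weierstrass_real_polynomial_function[OF compact_Icc f e] by blast
  obtain p where gp: "g = poly p" using rpf_poly[OF g(1)] by blast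
  define h where "h = (\<lambda>t. f t - poly p t)"
  have ch: "continuous_on {-1..1} h" unfolding h_def by (intro continuous_intros f)
  have hb: "\<And>t. t \<in> {-1..1} \<Longrightarrow> \<bar>h t\<bar> \<le> e" using g(2) unfolding h_def gp by (simp add: less_imp_le)
  have cp: "continuous_on {-1..1} (poly p)" by (intro continuous_intros)
  have fe: "f = (\<lambda>t. 1 * h t + poly p t)" by (simp add: h_def)
  have "Phi n f - Psi n f = Phi n h - Psi n h"
    unfolding fe Phi_lin[OF ch cp] Psi_lin[OF ch cp] Phi_Psi_poly by simp
  then have "d \<le> \<bar>Phi n h\<bar> + \<bar>Psi n h\<bar>" unfolding d_def by linarith
  also have "\<dots> \<le> (2 * e * pi + (e * pi * R) * 2) + 2 * e * pi"
    by (intro add_mono Phi_bound[OF ch hb R] Psi_bound[OF ch hb])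
  also have "\<dots> = e * C" by (simp add: C_def algebra_simps)
  also have "\<dots> = d / 2" unfolding e_def using C by simp
  finally show False using d by simp
qed

lemma Dplus_int:
  fixes f :: "real \<Rightarrow> real"
  assumes contf: "continuous_on {-1..1} f"
    and diff: "\<forall>x\<in>{-1<..<1}. Dplus_inner 0 f differentiable (at x)"
  shows "((\<lambda>x. Dplus 0 f x * legP n x) has_integral Phi n f) {-1..1}"
proof -
  have i1: "((\<lambda>x. Dplus 0 f x * legP n x + U f x * rP n x) has_integral 2 * U f 1) {-1..1}"
    by (rule core_ftc[OF contf diff])
  have i2: "((\<lambda>x. U f x * rP n x) has_integral integral {-1..1} (\<lambda>x. U f x * rP n x)) {-1..1}"
    by (rule integrable_integral, rule integrable_cont1) (intro continuous_intros cont_U[OF contf])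
  from has_integral_diff[OF i1 i2] show ?thesis unfolding Phi_def by simp
qed

lemma chebT_neg: "chebT m (-t) = (-1)^m * chebT m t"
proof -
  have "chebT m (-t) = (-1)^m * chebT m t \<and> chebT (Suc m) (-t) = (-1)^(Suc m) * chebT (Suc m) t"
    by (induction m) (auto simp: algebra_simps)
  then show ?thesis by blast
qed

lemma cheb_coeff_reflect: "cheb_coeff (\<lambda>t. f (-t)) m = (-1)^m * cheb_coeff f m"
proof -
  define g where "g = (\<lambda>s. (-1)^m * (f s * chebT m s * (1 - s^2) powr (-1/2)))"
  have "integral {- 1 .. - (-1)} (\<lambda>t. g (-t)) = integral {-1..1} g"
    by (rule Henstock_Kurzweil_Integration.integral_reflect_real)
  moreover have "(\<lambda>t. g (-t)) = (\<lambda>t. f (-t) * chebT m t * (1 - t^2) powr (-1/2))"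
  proof
    fix t
    have "(-1::real)^m * (-1)^m = 1" by (simp flip: power_add)
    then show "g (-t) = f (-t) * chebT m t * (1 - t^2) powr (-1/2)"
      unfolding g_def chebT_neg by (simp add: algebra_simps)
  qed
  moreover have "integral {-1..1} g = (-1)^m * integral {-1..1} (\<lambda>s. f s * chebT m s * (1 - s^2) powr (-1/2))"
    unfolding g_def by (rule Henstock_Kurzweil_Integration.integral_mult_right)
  ultimately show ?thesis unfolding cheb_coeff_def by simp
qed

lemma Ccos_reflect:
  assumes f: "continuous_on {-1..1} f"
  shows "Ccos (\<lambda>t. f (-t)) m = (-1)^m * Ccos f m"
proof -
  have ft: "continuous_on {-1..1} (\<lambda>t. f (-t))"
    by (rule continuous_on_compose2[OF f]) (auto intro!: continuous_intros)
  have c: "(if m = 0 then 1 / pi else 2 / pi) \<noteq> 0" by simp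
  have "(if m = 0 then 1 / pi else 2 / pi) * (-1)^m * Ccos (\<lambda>t. f (-t)) m =
        (if m = 0 then 1 / pi else 2 / pi) * (-1)^m * ((-1)^m * Ccos f m)"
    using cheb_coeff_reflect[of f m] unfolding cheb_coeff_Ccos[OF ft] cheb_coeff_Ccos[OF f]
    by (simp add: algebra_simps)
  then show ?thesis using c by simp
qed

lemma inner_reflect: "Dminus_inner 0 f x = Dplus_inner 0 (\<lambda>t. f (-t)) (-x)"
proof -
  define g where "g = (\<lambda>\<tau>. (\<tau> - x) powr (-1/2) * (1 - \<tau>) powr (0 - 1/2) * f \<tau>)"
  have "integral {- 1 .. - x} (\<lambda>\<tau>. g (-\<tau>)) = integral {x..1} g"
    by (rule Henstock_Kurzweil_Integration.integral_reflect_real)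
  moreover have "(\<lambda>\<tau>. g (-\<tau>)) = (\<lambda>\<tau>. (- x - \<tau>) powr (-1/2) * (1 + \<tau>) powr (0 - 1/2) * f (-\<tau>))"
  proof
    fix \<tau> :: real
    have e: "- \<tau> - x = - x - \<tau>" "1 - - \<tau> = 1 + \<tau>" by simp_all
    show "g (-\<tau>) = (- x - \<tau>) powr (-1/2) * (1 + \<tau>) powr (0 - 1/2) * f (-\<tau>)"
      unfolding g_def e by (rule refl)
  qed
  ultimately show ?thesis unfolding Dminus_inner_def Dplus_inner_def g_def by simp
qed

lemma reflect_facts:
  fixes f :: "real \<Rightarrow> real"
  assumes diff: "\<forall>x\<in>{-1<..<1}. Dminus_inner 0 f differentiable (at x)"
  shows "\<forall>y\<in>{-1<..<1}. Dplus_inner 0 (\<lambda>t. f (-t)) differentiable (at y)"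
    and "\<And>x. x \<in> {-1<..<1} \<Longrightarrow> Dminus 0 f x = - Dplus 0 (\<lambda>t. f (-t)) (-x)"
proof -
  define u where "u = Dplus_inner 0 (\<lambda>t. f (-t))"
  define v where "v = Dminus_inner 0 f"
  have vu: "v = (\<lambda>x. u (-x))" unfolding u_def v_def by (rule ext) (rule inner_reflect)
  have uv: "u = (\<lambda>y. v (-y))" unfolding vu by simp
  have du: "(u has_real_derivative - deriv v (-y)) (at y)" if y: "y \<in> {-1<..<1}" for y
  proof -
    have "(v has_real_derivative deriv v (-y)) (at (-y))"
      using diff y unfolding v_def by (simp add: DERIV_deriv_iff_real_differentiable)
    from DERIV_chain'[OF DERIV_minus[OF DERIV_ident] this]
    show ?thesis unfolding uv by simp
  qed
  show "\<forall>y\<in>{-1<..<1}. Dplus_inner 0 (\<lambda>t. f (-t)) differentiable (at y)"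
    using du unfolding u_def[symmetric] real_differentiable_def by blast
  fix x :: real assume x: "x \<in> {-1<..<1}"
  have dux: "(u has_real_derivative deriv u (-x)) (at (-x))"
    using du[of "-x"] x DERIV_imp_deriv by fastforce
  have "(v has_real_derivative deriv u (-x) * (-1)) (at x)"
    unfolding vu by (rule DERIV_chain'[OF DERIV_minus[OF DERIV_ident] dux])
  then have "deriv v x = - deriv u (-x)" by (simp add: DERIV_imp_deriv)
  then show "Dminus 0 f x = - Dplus 0 (\<lambda>t. f (-t)) (-x)"
    unfolding Dminus_def Dplus_def v_def[symmetric] u_def[symmetric] by simp
qed

lemma Dminus_int:
  fixes f :: "real \<Rightarrow> real"
  assumes contf: "continuous_on {-1..1} f"
    and diff: "\<forall>x\<in>{-1<..<1}. Dminus_inner 0 f differentiable (at x)"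
  shows "((\<lambda>x. Dminus 0 f x * legP n x) has_integral (- ((-1)^n * Phi n (\<lambda>t. f (-t))))) {-1..1}"
proof -
  have ft: "continuous_on {-1..1} (\<lambda>t. f (-t))"
    by (rule continuous_on_compose2[OF contf]) (auto intro!: continuous_intros)
  define g where "g = (\<lambda>y. (- ((-1)^n)) * (Dplus 0 (\<lambda>t. f (-t)) y * legP n y))"
  have "(g has_integral (- ((-1)^n * Phi n (\<lambda>t. f (-t))))) {-1..1}"
    unfolding g_def using has_integral_mult_right[OF Dplus_int[OF ft reflect_facts(1)[OF diff]], of "- ((-1)^n)" n]
    by simp
  then have "((\<lambda>x. g (-x)) has_integral (- ((-1)^n * Phi n (\<lambda>t. f (-t))))) {- 1 .. - (-1)}"
    by (simp only: Henstock_Kurzweil_Integration.has_integral_reflect_real)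
  then have H: "((\<lambda>x. g (-x)) has_integral (- ((-1)^n * Phi n (\<lambda>t. f (-t))))) {-1<..<1}"
    by (simp only: has_integral_Icc_iff_Ioo minus_minus)
  have E: "g (-x) = Dminus 0 f x * legP n x" if "x \<in> {-1<..<1}" for x
  proof -
    have s: "(-1::real)^n * (-1)^n = 1" by (simp flip: power_add)
    show ?thesis unfolding g_def reflect_facts(2)[OF diff that] legP_neg
      using s by (simp add: algebra_simps)
  qed
  have "((\<lambda>x. Dminus 0 f x * legP n x) has_integral (- ((-1)^n * Phi n (\<lambda>t. f (-t))))) {-1<..<1}"
    using H has_integral_cong[of "{-1<..<1}" "\<lambda>x. g (-x)" "\<lambda>x. Dminus 0 f x * legP n x"] E by blast
  then show ?thesis by (simp only: has_integral_Icc_iff_Ioo)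
qed

lemma final_alg:
  fixes N Cn C1 \<sigma> :: real
  assumes s: "\<sigma> * \<sigma> = 1" and N: "N \<ge> 0"
  shows "(2 * N + 1) / 2 * (2 / (2 * N + 1) * \<sigma> * (N * Cn - (N + 1) * C1) +
            - (\<sigma> * (2 / (2 * N + 1) * \<sigma> * (N * (\<sigma> * Cn) - (N + 1) * (- \<sigma> * C1))))) = 2 * (N + 1) * (- \<sigma>) * C1"
    and "(2 * N + 1) / 2 * (2 / (2 * N + 1) * \<sigma> * (N * Cn - (N + 1) * C1) -
            - (\<sigma> * (2 / (2 * N + 1) * \<sigma> * (N * (\<sigma> * Cn) - (N + 1) * (- \<sigma> * C1))))) = 2 * N * \<sigma> * Cn"
proof -
  define k where "k = 2 / (2 * N + 1)"
  have k: "(2 * N + 1) / 2 * k = 1" unfolding k_def using N by simp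
  have e: "\<sigma> * (k * \<sigma> * (N * (\<sigma> * Cn) - (N + 1) * (- \<sigma> * C1))) = k * \<sigma> * (N * Cn + (N+1) * C1)"
  proof -
    have "\<sigma> * (k * \<sigma> * (N * (\<sigma> * Cn) - (N + 1) * (- \<sigma> * C1))) = k * (\<sigma> * \<sigma>) * \<sigma> * (N * Cn + (N+1) * C1)"
      by (simp add: algebra_simps)
    then show ?thesis unfolding s by simp
  qed
  have "(2 * N + 1) / 2 * (k * \<sigma> * (N * Cn - (N + 1) * C1) + - (k * \<sigma> * (N * Cn + (N+1) * C1)))
      = ((2 * N + 1) / 2 * k) * (2 * (N + 1) * (- \<sigma>) * C1)" by (simp add: algebra_simps)
  then show "(2 * N + 1) / 2 * (2 / (2 * N + 1) * \<sigma> * (N * Cn - (N + 1) * C1) +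
            - (\<sigma> * (2 / (2 * N + 1) * \<sigma> * (N * (\<sigma> * Cn) - (N + 1) * (- \<sigma> * C1))))) = 2 * (N + 1) * (- \<sigma>) * C1"
    unfolding k_def[symmetric] e k by simp
  have "(2 * N + 1) / 2 * (k * \<sigma> * (N * Cn - (N + 1) * C1) - - (k * \<sigma> * (N * Cn + (N+1) * C1)))
      = ((2 * N + 1) / 2 * k) * (2 * N * \<sigma> * Cn)" by (simp add: algebra_simps)
  then show "(2 * N + 1) / 2 * (2 / (2 * N + 1) * \<sigma> * (N * Cn - (N + 1) * C1) -
            - (\<sigma> * (2 / (2 * N + 1) * \<sigma> * (N * (\<sigma> * Cn) - (N + 1) * (- \<sigma> * C1))))) = 2 * N * \<sigma> * Cn"
    unfolding k_def[symmetric] e k by simp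
qed

theorem theorem2p7:
  fixes f :: "real \<Rightarrow> real"
  assumes cont: "continuous_on {-1..1} f"
    and ac: "abs_cont_on_interval (-1) 1 f"
    and diff_plus: "\<forall>x\<in>{-1<..<1}. Dplus_inner 0 f differentiable (at x)"
    and diff_minus: "\<forall>x\<in>{-1<..<1}. Dminus_inner 0 f differentiable (at x)"
    and Cplus: "\<exists>F. continuous_on {-1..1} F \<and> (\<forall>x\<in>{-1<..<1}. F x = calD_plus 0 f x)"
    and Cminus: "\<exists>G. continuous_on {-1..1} G \<and> (\<forall>x\<in>{-1<..<1}. G x = calD_minus 0 f x)"
  shows "(\<forall>n. leg_coeff (calD_plus 0 f) n = real (n + 1) * pi * cheb_coeff f (n + 1)) \<and>
         (\<forall>n. leg_coeff (calD_minus 0 f) n = real n * pi * cheb_coeff f n)"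
proof -
  define g where "g = (\<lambda>t. f (-t))"
  have contg: "continuous_on {-1..1} g" unfolding g_def
    by (rule continuous_on_compose2[OF cont]) (auto intro!: continuous_intros)
  have main: "leg_coeff (calD_plus 0 f) n = real (n + 1) * pi * cheb_coeff f (n + 1) \<and>
         leg_coeff (calD_minus 0 f) n = real n * pi * cheb_coeff f n" for n
  proof -
    have I1: "((\<lambda>x. Dplus 0 f x * legP n x) has_integral Phi n f) {-1..1}"
      by (rule Dplus_int[OF cont diff_plus])
    have I2: "((\<lambda>x. Dminus 0 f x * legP n x) has_integral (- ((-1)^n * Phi n g))) {-1..1}"
      unfolding g_def by (rule Dminus_int[OF cont diff_minus])
    have Ip: "integral {-1..1} (\<lambda>t. calD_plus 0 f t * legP n t) = Phi n f + - ((-1)^n * Phi n g)"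
      using has_integral_add[OF I1 I2] unfolding calD_plus_def by (simp add: distrib_right integral_unique)
    have Im: "integral {-1..1} (\<lambda>t. calD_minus 0 f t * legP n t) = Phi n f - - ((-1)^n * Phi n g)"
      using has_integral_diff[OF I1 I2] unfolding calD_minus_def by (simp add: left_diff_distrib integral_unique)
    have Pf: "Phi n f = 2 / (2 * real n + 1) * (-1)^n * (real n * Ccos f n - (real n + 1) * Ccos f (n+1))"
      using Phi_Psi[OF cont] by (simp add: Psi_def)
    have Pg: "Phi n g = 2 / (2 * real n + 1) * (-1)^n * (real n * ((-1)^n * Ccos f n) - (real n + 1) * (- ((-1)^n) * Ccos f (n+1)))"
      using Phi_Psi[OF contg] unfolding Psi_def g_def Ccos_reflect[OF cont] by simp
    have s: "((-1::real)^n) * ((-1)^n) = 1" by (simp flip: power_add)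
    note fa = final_alg[OF s, of "real n" "Ccos f n" "Ccos f (n+1)"]
    have c1: "cheb_coeff f (n+1) = 2 / pi * (- ((-1)^n)) * Ccos f (n+1)"
      using cheb_coeff_Ccos[OF cont, of "n+1"] by simp
    have c2: "real n * pi * cheb_coeff f n = 2 * real n * (-1)^n * Ccos f n"
      using cheb_coeff_Ccos[OF cont, of n] by (cases "n = 0") auto
    show ?thesis
    proof
      show "leg_coeff (calD_plus 0 f) n = real (n + 1) * pi * cheb_coeff f (n + 1)"
        unfolding leg_coeff_def Ip Pf Pg c1 using fa(1) by simp
      show "leg_coeff (calD_minus 0 f) n = real n * pi * cheb_coeff f n"
        unfolding leg_coeff_def Im Pf Pg c2 using fa(2) by simp
    qed
  qed
  then show ?thesis by blast
qed

end
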